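(* Let $K\subset\mathbb{R}^3$ be a convex body with $K=-K$, let $L=\mathrm{lin}(\{e_1,e_2\})$, and let $r>0$ be such that $r\,\mathrm{B}_{2,L}\subset K|L$. Then there exist points $p_1,p_2,p_3\in L$ such that $\mathrm{conv}(\{\pm p_i:i=1,2,3\})$ is a regular hexagon inscribed in $r\,\mathrm{B}_{2,L}$ (all its vertices lie on the circle of radius $r$ centered at $0$ in $L$), and points $q_1,q_2,q_3\in K$ with $-q_1,-q_2,-q_3\in K$, such that $q_i|L=p_i$ (hence $(-q_i)|L=-p_i$) for $i=1,2,3$, and $\dim\mathrm{conv}(\{\pm q_i:i=1,2,3\})=2$.
   Context: A convex body is a compact convex subset of $\mathbb{R}^3$. $e_1,e_2,e_3$ are the canonical unit vectors, $\mathrm{B}_{2,L}=\mathrm{B}_3\cap L$ is the Euclidean unit disc of $L$, and $K|L$ is the orthogonal projection of $K$ onto $L$. *)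

theory Defs
  imports "HOL-Analysis.Analysis"
begin

definition e1 :: "real^3" where "e1 = axis 1 1"
definition e2 :: "real^3" where "e2 = axis 2 1"
definition e3 :: "real^3" where "e3 = axis 3 1"

definition convex_body :: "(real^3) set \<Rightarrow> bool" where
  "convex_body K \<longleftrightarrow> compact K \<and> convex K"

definition planeL :: "(real^3) set" where "planeL = span {e1, e2}"

definition projL :: "real^3 \<Rightarrow> real^3" where
  "projL x = x - (x \<bullet> e3) *\<^sub>R e3"

definition discL :: "real \<Rightarrow> (real^3) set" where
  "discL r = {x \<in> planeL. norm x \<le> r}"

definition inscribed_regular_hexagon :: "real \<Rightarrow> (real^3) set \<Rightarrow> bool" where
  "inscribed_regular_hexagon r H \<longleftrightarrow>
     (\<exists>\<theta>::real. H = convex hull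
        ((\<lambda>k::nat. (r * cos (\<theta> + real k * pi / 3)) *\<^sub>R e1
                   + (r * sin (\<theta> + real k * pi / 3)) *\<^sub>R e2) ` {0..<6}))"

end

theory Submission
  imports Defs
begin

definition hv :: "real \<Rightarrow> real \<Rightarrow> nat \<Rightarrow> real^3" where
  "hv r t k = (r * cos (t + real k * pi / 3)) *\<^sub>R e1 + (r * sin (t + real k * pi / 3)) *\<^sub>R e2"

lemma inner_e3: "x \<bullet> e3 = x $ 3"
  by (simp add: e3_def inner_axis)

lemma e_comps: "e1 $ 1 = 1" "e1 $ 2 = 0" "e1 $ 3 = 0" "e2 $ 1 = 0" "e2 $ 2 = 1" "e2 $ 3 = 0"
  "e3 $ 1 = 0" "e3 $ 2 = 0" "e3 $ 3 = 1"
  by (simp_all add: e1_def e2_def e3_def axis_def)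

lemma projL_comp: "projL x $ 1 = x $ 1" "projL x $ 2 = x $ 2" "projL x $ 3 = 0"
  by (simp_all add: projL_def inner_e3 e_comps)

lemma vec3_eq: "(x::real^3) = y \<longleftrightarrow> x$1 = y$1 \<and> x$2 = y$2 \<and> x$3 = y$3"
  by (simp add: vec_eq_iff forall_3)

lemma projL_neg: "projL (- x) = - projL x"
  by (simp add: projL_def)

lemma projL_diff: "projL (x - y) = projL x - projL y"
  by (simp add: projL_def inner_diff_left algebra_simps)

lemma projL_cont: "continuous_on S projL"
  unfolding projL_def by (intro continuous_intros)

lemma hv_cont: "continuous_on S (\<lambda>t. hv r t k)"
  unfolding hv_def by (intro continuous_intros)

lemma hv_comps: "hv r t k $ 1 = r * cos (t + real k * pi / 3)" "hv r t k $ 2 = r * sin (t + real k * pi / 3)"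
  "hv r t k $ 3 = 0"
  by (simp_all add: hv_def e_comps)

lemma hv_shift: "hv r t (k+3) = - hv r t k"
proof -
  have "t + real (k+3) * pi / 3 = (t + real k * pi / 3) + pi" by (simp add: field_simps)
  then show ?thesis by (simp only: vec3_eq hv_comps vector_uminus_component; simp)
qed

lemma hv_rot: "hv r (t + pi/3) k = hv r t (Suc k)"
proof -
  have "t + pi/3 + real k * pi / 3 = t + real (Suc k) * pi / 3" by (simp add: field_simps)
  then show ?thesis by (simp only: vec3_eq hv_comps vector_uminus_component; simp)
qed

lemma hv_rel: "hv r t 2 = hv r t 1 - hv r t 0"
proof -
  have c: "cos (t + 2 * pi / 3) = cos (t + pi/3) - cos t"
    using cos_add[of t "2*pi/3"] cos_add[of t "pi/3"]
    by (simp add: cos_120 sin_120 cos_60 sin_60)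
  have s: "sin (t + 2 * pi / 3) = sin (t + pi/3) - sin t"
    using sin_add[of t "2*pi/3"] sin_add[of t "pi/3"]
    by (simp add: cos_120 sin_120 cos_60 sin_60)
  show ?thesis using c s by (simp add: vec3_eq hv_comps right_diff_distrib)
qed

lemma hv_plane: "hv r t k \<in> planeL"
  unfolding hv_def planeL_def by (intro span_add span_mul span_base) auto

lemma hv_disc: "hv r t k = r *\<^sub>R hv 1 t k" "hv 1 t k \<in> discL 1"
proof -
  show "hv r t k = r *\<^sub>R hv 1 t k" by (simp add: vec3_eq hv_comps)
  have "hv 1 t k \<bullet> hv 1 t k = 1"
    by (simp add: inner_vec_def sum_3 hv_comps sin_cos_squared_add3)
  then have "norm (hv 1 t k) = 1" by (simp add: norm_eq_sqrt_inner)
  then show "hv 1 t k \<in> discL 1" using hv_plane by (simp add: discL_def)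
qed

lemma projL_rec: "x = projL x + (x $ 3) *\<^sub>R e3"
  by (simp add: projL_def inner_e3)


lemma hv_nz: "r > 0 \<Longrightarrow> hv r t k \<noteq> 0"
proof
  assume "r > 0" "hv r t k = 0"
  then have "r * cos (t + real k * pi / 3) = 0" "r * sin (t + real k * pi / 3) = 0"
    using hv_comps[of r t k] by auto
  with \<open>r>0\<close> show False using sin_cos_squared_add[of "t + real k * pi / 3"] by simp
qed

lemma projL_comb: "projL (a *\<^sub>R x + b *\<^sub>R y) = a *\<^sub>R projL x + b *\<^sub>R projL y"
  by (simp add: projL_def inner_add_left algebra_simps)

lemma closed_lift:
  fixes K :: "(real^3) set"
  assumes "compact K"
  shows "compact (fst ` (({0..pi/3} \<times> (K \<times> (K \<times> K))) \<inter>
     {z. projL (fst (snd z)) = hv r (fst z) 0 \<and> projL (fst (snd (snd z))) = hv r (fst z) 1 \<and>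
         projL (snd (snd (snd z))) = hv r (fst z) 2 \<and>
         c * (fst (snd z) \<bullet> e3 - fst (snd (snd z)) \<bullet> e3 + snd (snd (snd z)) \<bullet> e3) \<ge> 0}))"
proof -
  have "closed {z::real \<times> (real^3) \<times> (real^3) \<times> (real^3). projL (fst (snd z)) = hv r (fst z) 0 \<and> projL (fst (snd (snd z))) = hv r (fst z) 1 \<and>
         projL (snd (snd (snd z))) = hv r (fst z) 2 \<and>
         c * (fst (snd z) \<bullet> e3 - fst (snd (snd z)) \<bullet> e3 + snd (snd (snd z)) \<bullet> e3) \<ge> 0}"
  proof -
    have a: "continuous_on UNIV (\<lambda>z::real \<times> (real^3) \<times> (real^3) \<times> (real^3). projL (fst (snd z)))"
      "continuous_on UNIV (\<lambda>z::real \<times> (real^3) \<times> (real^3) \<times> (real^3). projL (fst (snd (snd z))))"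
      "continuous_on UNIV (\<lambda>z::real \<times> (real^3) \<times> (real^3) \<times> (real^3). projL (snd (snd (snd z))))"
      unfolding projL_def by (intro continuous_intros)+
    have b: "continuous_on UNIV (\<lambda>z::real \<times> (real^3) \<times> (real^3) \<times> (real^3). hv r (fst z) k)" for k
      unfolding hv_def by (intro continuous_intros)+
    have c: "continuous_on UNIV (\<lambda>z::real \<times> (real^3) \<times> (real^3) \<times> (real^3). c * (fst (snd z) \<bullet> e3 - fst (snd (snd z)) \<bullet> e3 + snd (snd (snd z)) \<bullet> e3))"
      by (intro continuous_intros)+
    show ?thesis
      by (intro closed_Collect_conj closed_Collect_eq[OF a(1) b] closed_Collect_eq[OF a(2) b]
          closed_Collect_eq[OF a(3) b] closed_Collect_le[OF continuous_on_const c])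
  qed
  moreover have "compact ({0..pi/3} \<times> (K \<times> (K \<times> K)))"
    using assms by (intro compact_Times) auto
  ultimately have "compact (({0..pi/3} \<times> (K \<times> (K \<times> K))) \<inter>
     {z. projL (fst (snd z)) = hv r (fst z) 0 \<and> projL (fst (snd (snd z))) = hv r (fst z) 1 \<and>
         projL (snd (snd (snd z))) = hv r (fst z) 2 \<and>
         c * (fst (snd z) \<bullet> e3 - fst (snd (snd z)) \<bullet> e3 + snd (snd (snd z)) \<bullet> e3) \<ge> 0})"
    by (simp add: compact_Int_closed)
  then show ?thesis
    by (rule compact_continuous_image[OF continuous_on_fst[OF continuous_on_id]])
qed


lemma lift_exists:
  assumes "r > 0" "(\<lambda>x. r *\<^sub>R x) ` discL 1 \<subseteq> projL ` K"
  shows "\<exists>x\<in>K. projL x = hv r t k"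
proof -
  have "hv r t k \<in> (\<lambda>x. r *\<^sub>R x) ` discL 1" using hv_disc(1)[of r t k] hv_disc(2)[of t k] by auto
  then have "hv r t k \<in> projL ` K" using assms(2) by blast
  then show ?thesis by force
qed

lemma choose_zero:
  fixes K :: "(real^3) set"
  assumes "convex K"
    and x: "x1 \<in> K" "x2 \<in> K" "x3 \<in> K" "projL x1 = hv r t 0" "projL x2 = hv r t 1" "projL x3 = hv r t 2"
    and y: "y1 \<in> K" "y2 \<in> K" "y3 \<in> K" "projL y1 = hv r t 0" "projL y2 = hv r t 1" "projL y3 = hv r t 2"
    and gx: "x1 \<bullet> e3 - x2 \<bullet> e3 + x3 \<bullet> e3 \<ge> 0"
    and gy: "y1 \<bullet> e3 - y2 \<bullet> e3 + y3 \<bullet> e3 \<le> 0"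
  shows "\<exists>z1 z2 z3. z1 \<in> K \<and> z2 \<in> K \<and> z3 \<in> K \<and> projL z1 = hv r t 0 \<and> projL z2 = hv r t 1
          \<and> projL z3 = hv r t 2 \<and> z1 \<bullet> e3 - z2 \<bullet> e3 + z3 \<bullet> e3 = 0"
proof -
  define a where "a = x1 \<bullet> e3 - x2 \<bullet> e3 + x3 \<bullet> e3"
  define b where "b = y1 \<bullet> e3 - y2 \<bullet> e3 + y3 \<bullet> e3"
  show ?thesis
  proof (cases "a = b")
    case True
    then have "a = 0" using gx gy a_def b_def by linarith
    then show ?thesis using x unfolding a_def by (intro exI[of _ x1] exI[of _ x2] exI[of _ x3]) simp
  next
    case False
    then have ab: "a - b > 0" using gx gy a_def b_def by linarith
    define u where "u = a / (a - b)"
    have u0: "0 \<le> u" "u \<le> 1" using ab gx gy a_def b_def by (auto simp: u_def field_simps)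
    define z :: "real^3 \<Rightarrow> real^3 \<Rightarrow> real^3" where "z = (\<lambda>p q. (1 - u) *\<^sub>R p + u *\<^sub>R q)"
    have zK: "z p q \<in> K" if "p \<in> K" "q \<in> K" for p q
      using convexD_alt[OF assms(1) that u0] by (simp add: z_def)
    have zp: "projL (z p q) = hv r t j" if "projL p = hv r t j" "projL q = hv r t j" for p q j
      unfolding z_def projL_comb that by (simp add: scaleR_diff_left)
    have "(1 - u) * a + u * b = 0" using ab by (simp add: u_def field_simps)
    then have "z x1 y1 \<bullet> e3 - z x2 y2 \<bullet> e3 + z x3 y3 \<bullet> e3 = 0"
      by (simp add: z_def inner_add_left a_def b_def algebra_simps)
    moreover note zK[OF x(1) y(1)] zK[OF x(2) y(2)] zK[OF x(3) y(3)]
      zp[OF x(4) y(4)] zp[OF x(5) y(5)] zp[OF x(6) y(6)]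
    ultimately show ?thesis by (intro exI[of _ "z x1 y1"] exI[of _ "z x2 y2"] exI[of _ "z x3 y3"]) simp
  qed
qed

theorem lemma2p1:
  fixes K :: "(real^3) set" and r :: real
  assumes "convex_body K"
    and "uminus ` K = K"
    and "r > 0"
    and "(\<lambda>x. r *\<^sub>R x) ` discL 1 \<subseteq> projL ` K"
  shows "\<exists>p1 p2 p3 q1 q2 q3.
           p1 \<in> planeL \<and> p2 \<in> planeL \<and> p3 \<in> planeL \<and>
           inscribed_regular_hexagon r (convex hull {p1, p2, p3, -p1, -p2, -p3}) \<and>
           q1 \<in> K \<and> q2 \<in> K \<and> q3 \<in> K \<and> -q1 \<in> K \<and> -q2 \<in> K \<and> -q3 \<in> K \<and>
           projL q1 = p1 \<and> projL q2 = p2 \<and> projL q3 = p3 \<and>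
           aff_dim (convex hull {q1, q2, q3, -q1, -q2, -q3}) = 2"
proof -
  have cK: "compact K" "convex K" using assms(1) by (auto simp: convex_body_def)
  have symK: "- x \<in> K" if "x \<in> K" for x
    using assms(2) that by (metis image_eqI)
  define G where "G t x1 x2 x3 \<longleftrightarrow> x1 \<in> K \<and> x2 \<in> K \<and> x3 \<in> K \<and> projL x1 = hv r t 0
     \<and> projL x2 = hv r t 1 \<and> projL x3 = hv r t 2" for t x1 x2 x3
  define g where "g x1 x2 x3 = x1 \<bullet> e3 - x2 \<bullet> e3 + x3 \<bullet> e3" for x1 x2 x3 :: "real^3"
  define S where "S = {0..pi/3}"
  define P where "P c = {t \<in> S. \<exists>x1 x2 x3. G t x1 x2 x3 \<and> c * g x1 x2 x3 \<ge> 0}" for c :: real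
  have closedP: "closed (P c)" for c
  proof -
    have "P c = fst ` (({0..pi/3} \<times> (K \<times> (K \<times> K))) \<inter>
     {z. projL (fst (snd z)) = hv r (fst z) 0 \<and> projL (fst (snd (snd z))) = hv r (fst z) 1 \<and>
         projL (snd (snd (snd z))) = hv r (fst z) 2 \<and>
         c * (fst (snd z) \<bullet> e3 - fst (snd (snd z)) \<bullet> e3 + snd (snd (snd z)) \<bullet> e3) \<ge> 0})"
      (is "_ = fst ` ?T")
    proof
      show "P c \<subseteq> fst ` ?T"
      proof
        fix t assume "t \<in> P c"
        then obtain x1 x2 x3 where "t \<in> S" "G t x1 x2 x3" "c * g x1 x2 x3 \<ge> 0"
          unfolding P_def by blast
        then have "(t, x1, x2, x3) \<in> ?T" by (auto simp: G_def g_def S_def)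
        then show "t \<in> fst ` ?T" by force
      qed
      show "fst ` ?T \<subseteq> P c"
      proof
        fix t assume "t \<in> fst ` ?T"
        then obtain x1 x2 x3 where "(t, x1, x2, x3) \<in> ?T" by force
        then show "t \<in> P c" unfolding P_def G_def g_def S_def by auto
      qed
    qed
    then show ?thesis using closed_lift[OF cK(1), of r c] by (simp add: compact_imp_closed)
  qed
  have lift: "\<exists>x\<in>K. projL x = hv r t k" for t k
    using lift_exists[OF assms(3,4)] .
  have cover: "S \<subseteq> P 1 \<union> P (-1)"
  proof
    fix t assume "t \<in> S"
    obtain x1 x2 x3 where "G t x1 x2 x3" using lift[of t 0] lift[of t 1] lift[of t 2]
      unfolding G_def by blast
    moreover have "1 * g x1 x2 x3 \<ge> 0 \<or> (-1) * g x1 x2 x3 \<ge> 0" by linarith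
    ultimately show "t \<in> P 1 \<union> P (-1)" using \<open>t \<in> S\<close> unfolding P_def
      by blast
  qed
  have rot: "G (pi/3) x2 x3 (-x1)" "g x2 x3 (-x1) = - g x1 x2 x3" if "G 0 x1 x2 x3" for x1 x2 x3
  proof -
    have h: "hv r (pi/3) k = hv r 0 (Suc k)" for k using hv_rot[of r 0 k] by simp
    have h3: "hv r 0 (Suc (Suc (Suc 0))) = - hv r 0 0" using hv_shift[of r 0 0] by (simp add: numeral_eq_Suc)
    show "G (pi/3) x2 x3 (-x1)" using that symK unfolding G_def
      by (auto simp: h h3 projL_neg numeral_eq_Suc)
    show "g x2 x3 (-x1) = - g x1 x2 x3" by (simp add: g_def)
  qed
  have ne: "P 1 \<inter> S \<noteq> {}" "P (-1) \<inter> S \<noteq> {}"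
  proof -
    obtain x1 x2 x3 where G0: "G 0 x1 x2 x3" using lift[of 0 0] lift[of 0 1] lift[of 0 2]
      unfolding G_def by blast
    have S0: "0 \<in> S" "pi/3 \<in> S" by (auto simp: S_def)
    have "(0 \<in> P 1 \<and> pi/3 \<in> P (-1)) \<or> (0 \<in> P (-1) \<and> pi/3 \<in> P 1)"
    proof (cases "g x1 x2 x3 \<ge> 0")
      case True
      then show ?thesis using G0 rot[OF G0] S0 unfolding P_def by fastforce
    next
      case False
      then show ?thesis using G0 rot[OF G0] S0 unfolding P_def by fastforce
    qed
    then show "P 1 \<inter> S \<noteq> {}" "P (-1) \<inter> S \<noteq> {}" using S0 by auto
  qed
  have "P 1 \<inter> P (-1) \<inter> S \<noteq> {}"
  proof
    assume "P 1 \<inter> P (-1) \<inter> S = {}"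
    from connected_closedD[OF _ this cover closedP closedP] ne show False
      by (auto simp: S_def)
  qed
  then obtain t where t: "t \<in> P 1" "t \<in> P (-1)" by blast
  obtain x1 x2 x3 where x: "G t x1 x2 x3" "g x1 x2 x3 \<ge> 0" using t(1) unfolding P_def by auto
  obtain y1 y2 y3 where y: "G t y1 y2 y3" "g y1 y2 y3 \<le> 0" using t(2) unfolding P_def by auto
  obtain q1 q2 q3 where q: "G t q1 q2 q3" "g q1 q2 q3 = 0"
    using choose_zero[OF cK(2), of x1 x2 x3 r t y1 y2 y3] x y unfolding G_def g_def by blast
  define p1 where "p1 = hv r t 0"
  define p2 where "p2 = hv r t 1"
  define p3 where "p3 = hv r t 2"
  have qK: "q1 \<in> K" "q2 \<in> K" "q3 \<in> K" "projL q1 = p1" "projL q2 = p2" "projL q3 = p3"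
    using q(1) unfolding G_def p1_def p2_def p3_def by auto
  have hex: "inscribed_regular_hexagon r (convex hull {p1, p2, p3, -p1, -p2, -p3})"
  proof -
    have six: "{0..<6::nat} = {0,1,2,3,4,5}" by auto
    have "(\<lambda>k. hv r t k) ` {0..<6} = {p1, p2, p3, -p1, -p2, -p3}"
      using hv_shift[of r t 0] hv_shift[of r t 1] hv_shift[of r t 2]
      by (simp add: six p1_def p2_def p3_def insert_commute)
    then show ?thesis unfolding inscribed_regular_hexagon_def hv_def[abs_def]
      by (metis (no_types, lifting))
  qed
  have q3eq: "q3 = q2 - q1"
  proof -
    have "projL q3 = projL (q2 - q1)" using qK hv_rel[of r t] by (simp add: projL_diff p1_def p2_def p3_def)
    moreover have "q3 $ 3 = (q2 - q1) $ 3" using q(2) by (simp add: g_def inner_e3)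
    ultimately show ?thesis using projL_rec[of q3] projL_rec[of "q2 - q1"] by metis
  qed
  have ind: "independent {q1, q2}" and neq: "q1 \<noteq> q2"
  proof -
    have q2nz: "q2 \<noteq> 0" using qK(5) hv_nz[OF assms(3), of t 1] by (auto simp: p2_def projL_def)
    have "q1 \<notin> span {q2}"
    proof
      assume "q1 \<in> span {q2}"
      then obtain c where c: "q1 = c *\<^sub>R q2" by (auto simp: span_singleton)
      then have "hv r t 0 = c *\<^sub>R hv r t 1"
        using qK by (metis p1_def p2_def projL_comb[of c q2 0 q2] scaleR_zero_left add_0_right)
      then have e: "r * cos t = c * (r * cos (t + pi/3))" "r * sin t = c * (r * sin (t + pi/3))"
        using hv_comps[of r t 0] hv_comps[of r t 1] by (auto simp: vec3_eq)
      have "sin ((t + pi/3) - t) = sin (t + pi/3) * cos t - cos (t + pi/3) * sin t"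
        by (rule sin_diff)
      then have "sqrt 3 / 2 = sin (t + pi/3) * cos t - cos (t + pi/3) * sin t"
        by (simp add: sin_60)
      then have "r * r * (sqrt 3 / 2) = r * r * (sin (t + pi/3) * cos t - cos (t + pi/3) * sin t)"
        by (rule arg_cong[where f="\<lambda>v. r * r * v"])
      also have "\<dots> = (r * sin (t + pi/3)) * (r * cos t) - (r * cos (t + pi/3)) * (r * sin t)"
        by (simp add: algebra_simps)
      also have "\<dots> = 0" unfolding e by (simp add: algebra_simps)
      finally show False using assms(3) by simp
    qed
    then show "independent {q1, q2}" using q2nz
      by (intro independent_insertI) (auto simp: independent_empty)
    show "q1 \<noteq> q2" using \<open>q1 \<notin> span {q2}\<close> span_base by blast
  qed
  have ad: "aff_dim (convex hull {q1, q2, q3, -q1, -q2, -q3}) = 2"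
  proof -
    let ?Q = "{q1, q2, q3, -q1, -q2, -q3}"
    have "0 \<in> affine hull ?Q"
    proof -
      have "q1 \<in> affine hull ?Q" "-q1 \<in> affine hull ?Q" by (auto intro: hull_inc)
      from mem_affine[OF affine_affine_hull this, of "1/2" "1/2"] show ?thesis by simp
    qed
    then have "aff_dim ?Q = int (dim ?Q)" by (rule aff_dim_zero)
    moreover have "span ?Q = span {q1, q2}"
    proof
      show "span ?Q \<subseteq> span {q1, q2}"
        by (rule span_minimal) (auto simp: q3eq intro: span_base span_neg span_diff)
      show "span {q1, q2} \<subseteq> span ?Q" by (rule span_mono) auto
    qed
    then have "dim ?Q = dim {q1, q2}" by (metis dim_span)
    moreover have "dim {q1, q2} = 2" using dim_eq_card_independent[OF ind] neq by simp
    ultimately show ?thesis by (simp add: aff_dim_convex_hull)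
  qed
  show ?thesis
    apply (rule exI[of _ p1], rule exI[of _ p2], rule exI[of _ p3])
    apply (rule exI[of _ q1], rule exI[of _ q2], rule exI[of _ q3])
    using hex qK symK ad by (simp add: p1_def p2_def p3_def hv_plane)
qed

end
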